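(* Let $\sigma_\rho>0$ and let $W$ follow the unit-log-Laplace distribution, i.e. $W$ has PDF $$f_W(w;\sigma_\rho)=\frac{1}{w(1-w)\sigma_\rho}\,f_\ell(A(w)),\qquad 0<w<1,$$ where $f_\ell(x)=\frac{1}{\sqrt2}\exp(-\sqrt2|x|)$ is the PDF of the Laplace distribution with location $0$ and scale $1/\sqrt2$, and $A(w)=\frac{1}{\sigma_\rho}\log\frac{w}{1-w}$. If $\sigma_\rho\le\sqrt2$, then $f_W(\cdot;\sigma_\rho)$ is unimodal with mode $w_0=1/2$. If $\sigma_\rho>\sqrt2$, then $f_W(\cdot;\sigma_\rho)$ is decreasing-increasing-decreasing-increasing with minimum points $$w_-=\frac{1}{1+\exp\big(2\,{\rm arctanh}(\sqrt2/\sigma_\rho)\big)},\qquad w_+=\frac{1}{1+\exp\big(-2\,{\rm arctanh}(\sqrt2/\sigma_\rho)\big)},$$ and maximum point $w_0=1/2$, with $0<w_-<w_0<w_+<1$. Moreover, $f_W(\cdot;\sigma_\rho)$ is not differentiable at $w_0=1/2$ and is symmetric around $w_0=1/2$.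
   Context: This is the unit-log-symmetric distribution ${\rm ULS}(\sigma_\rho,g_c)$ with density generator $g_c(x)=K_0(\sqrt{2x})$, where $K_0(u)=\frac12\int_0^\infty t^{-1}\exp(-t-\frac{u^2}{4t})\,{\rm d}t$ and $\sigma_\rho=\sigma\sqrt{2(1-\rho)}$; for this generator the ULS PDF reduces to the displayed formula. *)

theory Defs
  imports Complex_Main
begin

definition laplace_pdf :: "real \<Rightarrow> real" where
  "laplace_pdf x = 1 / sqrt 2 * exp (- sqrt 2 * \<bar>x\<bar>)"

definition ull_A :: "real \<Rightarrow> real \<Rightarrow> real" where
  "ull_A \<sigma> w = 1 / \<sigma> * ln (w / (1 - w))"

definition ull_pdf :: "real \<Rightarrow> real \<Rightarrow> real" where
  "ull_pdf \<sigma> w = (if 0 < w \<and> w < 1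
      then 1 / (w * (1 - w) * \<sigma>) * laplace_pdf (ull_A \<sigma> w) else 0)"

end

theory Submission
  imports Defs
begin

definition Lf :: "real \<Rightarrow> real \<Rightarrow> real" where
  "Lf \<sigma> w = (sqrt 2 / \<sigma> - 1) * ln w - (sqrt 2 / \<sigma> + 1) * ln (1 - w)"

lemma pdf_left:
  assumes "0 < \<sigma>" "0 < w" "w \<le> 1/2"
  shows "ull_pdf \<sigma> w = 1 / (\<sigma> * sqrt 2) * exp (Lf \<sigma> w)"
proof -
  have w1: "0 < 1 - w" using assms by simp
  have "w / (1 - w) \<le> 1" using assms by (simp add: divide_simps)
  hence lnle: "ln (w / (1 - w)) \<le> 0" using assms w1 by simp
  have A: "\<bar>ull_A \<sigma> w\<bar> = - (ln w - ln (1 - w)) / \<sigma>"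
    using lnle assms w1 by (simp add: ull_A_def ln_div abs_if divide_simps)
  have e1: "exp (- sqrt 2 * \<bar>ull_A \<sigma> w\<bar>) = exp (sqrt 2 / \<sigma> * (ln w - ln (1 - w)))"
    using assms by (simp add: A field_simps)
  have e2: "1 / (w * (1 - w)) = exp (- ln w - ln (1 - w))"
    using assms w1 by (simp add: exp_diff exp_minus inverse_eq_divide)
  have "ull_pdf \<sigma> w = 1 / (w * (1 - w) * \<sigma>) * (1 / sqrt 2 * exp (- sqrt 2 * \<bar>ull_A \<sigma> w\<bar>))"
    using assms w1 by (simp add: ull_pdf_def laplace_pdf_def)
  also have "\<dots> = 1 / (\<sigma> * sqrt 2) * (1 / (w * (1 - w)) * exp (sqrt 2 / \<sigma> * (ln w - ln (1 - w))))"
    unfolding e1 by simp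
  also have "\<dots> = 1 / (\<sigma> * sqrt 2) * exp (Lf \<sigma> w)"
    unfolding e2 Lf_def mult_exp_exp by (simp add: algebra_simps)
  finally show ?thesis .
qed

lemma pdf_sym: "ull_pdf \<sigma> (1 - w) = ull_pdf \<sigma> w"
proof (cases "0 < w \<and> w < 1 \<and> \<sigma> \<noteq> 0")
  case True
  have "ull_A \<sigma> (1 - w) = - ull_A \<sigma> w"
    using True by (simp add: ull_A_def ln_div minus_divide_left)
  moreover have "(1 - w) * (1 - (1 - w)) = w * (1 - w)" by simp
  ultimately show ?thesis using True by (simp add: ull_pdf_def laplace_pdf_def)
next
  case False
  then show ?thesis by (auto simp: ull_pdf_def)
qed

lemma pdf_sym0: "\<sigma> = 0 \<Longrightarrow> ull_pdf \<sigma> w = 0"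
  by (simp add: ull_pdf_def)

lemma L_deriv0:
  fixes c w :: real
  assumes "0 < w" "w < 1"
  shows "((\<lambda>w. (c - 1) * ln w - (c + 1) * ln (1 - w)) has_real_derivative ((c - 1) / w + (c + 1) / (1 - w))) (at w)"
  using assms by (auto intro!: derivative_eq_intros simp: divide_simps algebra_simps)

lemma L_deriv:
  assumes "0 < w" "w < 1" "\<sigma> \<noteq> 0"
  shows "(Lf \<sigma> has_real_derivative ((sqrt 2 / \<sigma> - 1) / w + (sqrt 2 / \<sigma> + 1) / (1 - w))) (at w)"
  unfolding Lf_def using L_deriv0[OF assms(1,2), of "sqrt 2 / \<sigma>"] .

lemma L_cont: "0 < a \<Longrightarrow> b < 1 \<Longrightarrow> continuous_on {a..b} (Lf \<sigma>)"
  unfolding Lf_def by (intro continuous_intros) auto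

lemma deriv_sign0:
  fixes c x :: real
  assumes "0 < x" "x < 1"
  shows "(c - 1) / x + (c + 1) / (1 - x) = (c - 1 + 2 * x) / (x * (1 - x))"
  using assms by (simp add: field_simps)

lemma deriv_sign:
  assumes "0 < x" "x < 1"
  shows "(sqrt 2 / \<sigma> - 1) / x + (sqrt 2 / \<sigma> + 1) / (1 - x) = (sqrt 2 / \<sigma> - 1 + 2 * x) / (x * (1 - x))"
  using deriv_sign0[OF assms] .

lemma incr:
  assumes "0 < \<sigma>" "0 < a" "a < b" "b \<le> 1/2"
    and pos: "\<And>x. a < x \<Longrightarrow> x < b \<Longrightarrow> sqrt 2 / \<sigma> - 1 + 2 * x > 0"
  shows "ull_pdf \<sigma> a < ull_pdf \<sigma> b"
proof -
  have "Lf \<sigma> a < Lf \<sigma> b"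
  proof (rule DERIV_pos_imp_increasing_open[OF assms(3)])
    fix x assume x: "a < x" "x < b"
    hence "0 < x" "x < 1" using assms by auto
    thus "\<exists>y. (Lf \<sigma> has_real_derivative y) (at x) \<and> 0 < y"
      using assms(1) L_deriv[of x \<sigma>] deriv_sign[of x \<sigma>] pos[OF x]
      by (intro exI[of _ "(sqrt 2 / \<sigma> - 1 + 2 * x) / (x * (1 - x))"]) auto
  next
    show "continuous_on {a..b} (Lf \<sigma>)" using assms by (intro L_cont) auto
  qed
  thus ?thesis using assms by (simp add: pdf_left divide_strict_right_mono)
qed

lemma decr:
  assumes "0 < \<sigma>" "0 < a" "a < b" "b \<le> 1/2"
    and neg: "\<And>x. a < x \<Longrightarrow> x < b \<Longrightarrow> sqrt 2 / \<sigma> - 1 + 2 * x < 0"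
  shows "ull_pdf \<sigma> a > ull_pdf \<sigma> b"
proof -
  have "Lf \<sigma> a > Lf \<sigma> b"
  proof (rule DERIV_neg_imp_decreasing_open[OF assms(3)])
    fix x assume x: "a < x" "x < b"
    hence "0 < x" "x < 1" using assms by auto
    thus "\<exists>y. (Lf \<sigma> has_real_derivative y) (at x) \<and> y < 0"
      using assms(1) L_deriv[of x \<sigma>] deriv_sign[of x \<sigma>] neg[OF x]
      by (intro exI[of _ "(sqrt 2 / \<sigma> - 1 + 2 * x) / (x * (1 - x))"])
         (auto simp: divide_neg_pos)
  next
    show "continuous_on {a..b} (Lf \<sigma>)" using assms by (intro L_cont) auto
  qed
  thus ?thesis using assms by (simp add: pdf_left divide_strict_right_mono)
qed

lemma nondiff:
  assumes "0 < \<sigma>"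
  shows "\<not> (ull_pdf \<sigma> differentiable (at (1/2)))"
proof
  assume "ull_pdf \<sigma> differentiable (at (1/2))"
  then obtain D where D: "(ull_pdf \<sigma> has_real_derivative D) (at (1/2))"
    unfolding real_differentiable_def by blast
  have D2: "((\<lambda>y. ull_pdf \<sigma> (1 - y)) has_real_derivative D * (-1)) (at (1/2))"
  proof -
    have g: "((\<lambda>y. 1 - y) has_real_derivative 0 - 1) (at (1/2::real))"
      by (rule DERIV_diff[OF DERIV_const DERIV_ident])
    have D': "(ull_pdf \<sigma> has_real_derivative D) (at (1 - 1/2))" using D by simp
    show ?thesis using DERIV_chain2[OF D' g] by (simp only: diff_0)
  qed
  have eqf: "(\<lambda>y. ull_pdf \<sigma> (1 - y)) = ull_pdf \<sigma>"
    by (rule ext, rule pdf_sym)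
  have "(ull_pdf \<sigma> has_real_derivative D * (-1)) (at (1/2))"
    using D2 unfolding eqf .
  hence "D = D * (-1)" by (rule DERIV_unique[OF D])
  hence D0: "D = 0" by linarith
  define K where "K = 1 / (\<sigma> * sqrt 2)"
  define D' where "D' = K * exp (Lf \<sigma> (1/2)) * (4 * (sqrt 2 / \<sigma>))"
  have GD: "((\<lambda>w. K * exp (Lf \<sigma> w)) has_real_derivative D') (at (1/2))"
  proof -
    have "(Lf \<sigma> has_real_derivative 4 * (sqrt 2 / \<sigma>)) (at (1/2))"
      using L_deriv[of "1/2" \<sigma>] assms by (simp add: field_simps)
    from DERIV_chain2[OF DERIV_exp this]
    have "((\<lambda>w. exp (Lf \<sigma> w)) has_real_derivative exp (Lf \<sigma> (1/2)) * (4 * (sqrt 2 / \<sigma>))) (at (1/2))" .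
    from DERIV_cmult[OF this, of K] show ?thesis unfolding D'_def by (simp add: mult.assoc)
  qed
  have t1: "((\<lambda>y. (ull_pdf \<sigma> y - ull_pdf \<sigma> (1/2)) / (y - 1/2)) \<longlongrightarrow> D) (at_left (1/2))"
    using D unfolding has_field_derivative_iff by (rule tendsto_mono[rotated]) (simp add: at_le)
  have t2: "((\<lambda>y. (K * exp (Lf \<sigma> y) - K * exp (Lf \<sigma> (1/2))) / (y - 1/2)) \<longlongrightarrow> D') (at_left (1/2))"
    using GD unfolding has_field_derivative_iff by (rule tendsto_mono[rotated]) (simp add: at_le)
  have evl: "eventually (\<lambda>y. y \<in> {0<..<1/2}) (at_left (1/2::real))"
    by (rule eventually_at_left_real) simp
  have ev: "eventually (\<lambda>y. (K * exp (Lf \<sigma> y) - K * exp (Lf \<sigma> (1/2))) / (y - 1/2)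
        = (ull_pdf \<sigma> y - ull_pdf \<sigma> (1/2)) / (y - 1/2)) (at_left (1/2::real))"
    using evl by eventually_elim (use assms in \<open>auto simp: pdf_left K_def\<close>)
  have "((\<lambda>y. (ull_pdf \<sigma> y - ull_pdf \<sigma> (1/2)) / (y - 1/2)) \<longlongrightarrow> D') (at_left (1/2))"
    by (rule Lim_transform_eventually[OF t2 ev])
  from tendsto_unique[OF _ t1 this] have "D = D'" by simp
  moreover have "D' \<noteq> 0" using assms by (simp add: D'_def K_def)
  ultimately show False using D0 by simp
qed

lemma refl_anti:
  assumes "strict_mono_on A (ull_pdf \<sigma>)" "\<And>x. x \<in> B \<Longrightarrow> 1 - x \<in> A"
  shows "strict_antimono_on B (ull_pdf \<sigma>)"
  unfolding monotone_on_def
proof (intro ballI impI)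
  fix x y assume xy: "x \<in> B" "y \<in> B" "x < y"
  have "ull_pdf \<sigma> (1 - y) < ull_pdf \<sigma> (1 - x)"
    using assms(1) assms(2)[OF xy(1)] assms(2)[OF xy(2)] xy(3)
    unfolding monotone_on_def by auto
  thus "ull_pdf \<sigma> y < ull_pdf \<sigma> x" by (simp only: pdf_sym)
qed

lemma refl_mono:
  assumes "strict_antimono_on A (ull_pdf \<sigma>)" "\<And>x. x \<in> B \<Longrightarrow> 1 - x \<in> A"
  shows "strict_mono_on B (ull_pdf \<sigma>)"
  unfolding monotone_on_def
proof (intro ballI impI)
  fix x y assume xy: "x \<in> B" "y \<in> B" "x < y"
  have "ull_pdf \<sigma> (1 - x) < ull_pdf \<sigma> (1 - y)"
    using assms(1) assms(2)[OF xy(1)] assms(2)[OF xy(2)] xy(3)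
    unfolding monotone_on_def by auto
  thus "ull_pdf \<sigma> x < ull_pdf \<sigma> y" by (simp only: pdf_sym)
qed

lemma exp_artanh:
  fixes c :: real
  assumes "0 < c" "c < 1"
  shows "exp (2 * artanh c) = (1 + c) / (1 - c)" "exp (- 2 * artanh c) = (1 - c) / (1 + c)"
proof -
  have p: "(1 + c) / (1 - c) > 0" using assms by simp
  show "exp (2 * artanh c) = (1 + c) / (1 - c)" using p by (simp add: artanh_def)
  have "exp (- 2 * artanh c) = inverse (exp (2 * artanh c))" by (simp add: exp_minus[symmetric])
  also have "\<dots> = (1 - c) / (1 + c)" using p by (simp add: artanh_def)
  finally show "exp (- 2 * artanh c) = (1 - c) / (1 + c)" .
qed

theorem theorem3:
  fixes \<sigma> :: real
  assumes "\<sigma> > 0"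
  defines "w_minus \<equiv> 1 / (1 + exp (2 * artanh (sqrt 2 / \<sigma>)))"
      and "w_plus \<equiv> 1 / (1 + exp (- 2 * artanh (sqrt 2 / \<sigma>)))"
  shows "(\<sigma> \<le> sqrt 2 \<longrightarrow>
            strict_mono_on {0<..1/2} (ull_pdf \<sigma>) \<and>
            strict_antimono_on {1/2..<1} (ull_pdf \<sigma>))
       \<and> (\<sigma> > sqrt 2 \<longrightarrow>
            0 < w_minus \<and> w_minus < 1/2 \<and> 1/2 < w_plus \<and> w_plus < 1 \<and>
            strict_antimono_on {0<..w_minus} (ull_pdf \<sigma>) \<and>
            strict_mono_on {w_minus..1/2} (ull_pdf \<sigma>) \<and>
            strict_antimono_on {1/2..w_plus} (ull_pdf \<sigma>) \<and>
            strict_mono_on {w_plus..<1} (ull_pdf \<sigma>))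
       \<and> \<not> (ull_pdf \<sigma> differentiable (at (1/2)))
       \<and> (\<forall>w. 0 < w \<and> w < 1 \<longrightarrow> ull_pdf \<sigma> (1 - w) = ull_pdf \<sigma> w)"
proof (intro conjI impI)
  show "\<not> (ull_pdf \<sigma> differentiable (at (1/2)))" using nondiff[OF assms(1)] .
  show "\<forall>w. 0 < w \<and> w < 1 \<longrightarrow> ull_pdf \<sigma> (1 - w) = ull_pdf \<sigma> w" by (simp add: pdf_sym)
next
  define c where "c = sqrt 2 / \<sigma>"
  have cpos: "c > 0" using assms(1) by (simp add: c_def)
  {
    assume le: "\<sigma> \<le> sqrt 2"
    have c1: "c \<ge> 1" using le assms(1) by (simp add: c_def field_simps)
    show sm: "strict_mono_on {0<..1/2} (ull_pdf \<sigma>)"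
      unfolding monotone_on_def
    proof (intro ballI impI)
      fix x y :: real assume "x \<in> {0<..1/2}" "y \<in> {0<..1/2}" "x < y"
      thus "ull_pdf \<sigma> x < ull_pdf \<sigma> y"
        using c1 by (intro incr[OF assms(1)]) (auto simp: c_def[symmetric])
    qed
    show "strict_antimono_on {1/2..<1} (ull_pdf \<sigma>)"
      by (rule refl_anti[OF sm]) auto
  }
  {
    assume gt: "\<sigma> > sqrt 2"
    have c1: "c < 1" using gt assms(1) by (simp add: c_def field_simps)
    have wm: "w_minus = (1 - c) / 2"
      unfolding w_minus_def c_def[symmetric] exp_artanh(1)[OF cpos c1] using c1
      by (simp add: field_simps)
    have wp: "w_plus = (1 + c) / 2"
      unfolding w_plus_def c_def[symmetric] exp_artanh(2)[OF cpos c1] using c1 cpos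
      by (simp add: field_simps)
    show "0 < w_minus" "w_minus < 1/2" "1/2 < w_plus" "w_plus < 1"
      using cpos c1 wm wp by auto
    show sa: "strict_antimono_on {0<..w_minus} (ull_pdf \<sigma>)"
      unfolding monotone_on_def
    proof (intro ballI impI)
      fix x y :: real assume "x \<in> {0<..w_minus}" "y \<in> {0<..w_minus}" "x < y"
      thus "ull_pdf \<sigma> y < ull_pdf \<sigma> x"
        using c1 cpos wm by (intro decr[OF assms(1)]) (auto simp: c_def[symmetric])
    qed
    show sm: "strict_mono_on {w_minus..1/2} (ull_pdf \<sigma>)"
      unfolding monotone_on_def
    proof (intro ballI impI)
      fix x y :: real assume "x \<in> {w_minus..1/2}" "y \<in> {w_minus..1/2}" "x < y"
      thus "ull_pdf \<sigma> x < ull_pdf \<sigma> y"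
        using c1 cpos wm by (intro incr[OF assms(1)]) (auto simp: c_def[symmetric])
    qed
    show "strict_antimono_on {1/2..w_plus} (ull_pdf \<sigma>)"
      by (rule refl_anti[OF sm]) (auto simp: wm wp)
    show "strict_mono_on {w_plus..<1} (ull_pdf \<sigma>)"
      by (rule refl_mono[OF sa]) (auto simp: wm wp)
  }
qed

end
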